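(* Let $k\ge1$. The square Hermitian orthogonal design $\mathcal{H}_{2k-1}$ induces an irreducible representation of dimension $2^{k-1}$ of the group $\mathcal{G}_{2k-2}$.
   Context: Let $x_1,x_2,\ldots$ be formal real indeterminates. Define $\mathcal{H}_2=(x_1+x_2\sqrt{-1})$ and for $k>1$ the $2^{k-1}\times2^{k-1}$ matrix $\mathcal{H}_{2k}=\begin{pmatrix}\mathcal{H}_{2k-2} & (x_{2k-1}+x_{2k}\sqrt{-1})I_{2^{k-2}}\\ -(x_{2k-1}-x_{2k}\sqrt{-1})I_{2^{k-2}} & \mathcal{H}_{2k-2}^H\end{pmatrix}$ (conjugate transpose with $x_i$ real); $\mathcal{H}_{2k-1}$ is obtained from $\mathcal{H}_{2k}$ by setting $x_{2k}=0$. It satisfies $\mathcal{H}_{2k-1}^H\mathcal{H}_{2k-1}=(x_1^2+\cdots+x_{2k-1}^2)I$. For $m\ge0$, $\mathcal{G}_m$ is the group of order $2^{m+1}$ generated by $g_1,\ldots,g_m$ and a central element $-1$ of order $2$ subject to $g_i^2=-1$ and $g_ig_j=-g_jg_i$ for $i\ne j$. Induced representation: write $\mathcal{H}_{2k-1}=\sum_{i=1}^{2k-1}x_iE_{i-1}$ with $E_0,\ldots,E_{2k-2}\in M_{2^{k-1}}(\mathbb{C})$ (these are unitary with $E_i^HE_j+E_j^HE_i=0$ for $i\ne j$), let $G_i=E_0^HE_i$ for $i=1,\ldots,2k-2$; the induced representation $\rho$ of $\mathcal{G}_{2k-2}$ is given by $\rho(g_i)=G_i$, $\rho(-1)=-I$.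 *)

theory Defs
  imports Complex_Main "Jordan_Normal_Form.Matrix"
begin

definition mat_H :: "complex mat \<Rightarrow> complex mat" where
  "mat_H A = transpose_mat (map_mat cnj A)"

(* Hd k x = the 2^(k-1) x 2^(k-1) matrix \<H>_{2k} evaluated at real values x 1, x 2, ... (1-based);
   defined for k \<ge> 1 (the value at k = 0 is an irrelevant dummy) *)
fun Hd :: "nat \<Rightarrow> (nat \<Rightarrow> real) \<Rightarrow> complex mat" where
  "Hd 0 x = 0\<^sub>m 1 1"
| "Hd (Suc 0) x = mat 1 1 (\<lambda>_. Complex (x 1) (x 2))"
| "Hd (Suc (Suc k)) x =
     (let n = 2 ^ k; A = Hd (Suc k) x; z = Complex (x (2*k+3)) (x (2*k+4)) in
      four_block_mat A (z \<cdot>\<^sub>m 1\<^sub>m n) ((- cnj z) \<cdot>\<^sub>m 1\<^sub>m n) (mat_H A))"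

(* \<H>_{2k-1}: set x_{2k} = 0 *)
definition Hodd :: "nat \<Rightarrow> (nat \<Rightarrow> real) \<Rightarrow> complex mat" where
  "Hodd k x = Hd k (x(2*k := 0))"

(* coefficient matrices: \<H>_{2k-1} = \<Sum>_{i=1}^{2k-1} x_i E_{i-1}; since \<H>_{2k-1} is linear in x,
   E_{i} is \<H>_{2k-1} evaluated at the unit vector x_{i+1} = 1, other x_j = 0 *)
definition Ecoef :: "nat \<Rightarrow> nat \<Rightarrow> complex mat" where
  "Ecoef k i = Hodd k (\<lambda>j. if j = i + 1 then 1 else 0)"

definition Gmat :: "nat \<Rightarrow> nat \<Rightarrow> complex mat" where
  "Gmat k i = mat_H (Ecoef k 0) * Ecoef k i"

(* The assignment g_i \<mapsto> R i (i = 1..m), -1 \<mapsto> -I extends to a representation of the group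
   \<G>_m (presented by generators g_1..g_m, central -1 of order 2, g_i^2 = -1, g_i g_j = - g_j g_i)
   on \<complex>^n, i.e. the images satisfy the defining relations. *)
definition is_G_rep :: "nat \<Rightarrow> nat \<Rightarrow> (nat \<Rightarrow> complex mat) \<Rightarrow> bool" where
  "is_G_rep m n R \<longleftrightarrow>
     (\<forall>i\<in>{1..m}. R i \<in> carrier_mat n n \<and> R i * R i = - 1\<^sub>m n) \<and>
     (\<forall>i\<in>{1..m}. \<forall>j\<in>{1..m}. i \<noteq> j \<longrightarrow> R i * R j = - (R j * R i))"

(* a subspace of \<complex>^n invariant under all images of the generators g_i and -1
   (hence under the whole group image) *)
definition G_invariant_subspace :: "nat \<Rightarrow> nat \<Rightarrow> (nat \<Rightarrow> complex mat) \<Rightarrow> complex vec set \<Rightarrow> bool" where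
  "G_invariant_subspace m n R W \<longleftrightarrow>
     W \<subseteq> carrier_vec n \<and> 0\<^sub>v n \<in> W \<and>
     (\<forall>v\<in>W. \<forall>w\<in>W. v + w \<in> W) \<and> (\<forall>c. \<forall>w\<in>W. c \<cdot>\<^sub>v w \<in> W) \<and>
     (\<forall>i\<in>{1..m}. \<forall>w\<in>W. R i *\<^sub>v w \<in> W) \<and> (\<forall>w\<in>W. (- 1\<^sub>m n) *\<^sub>v w \<in> W)"

definition irreducible_G_rep :: "nat \<Rightarrow> nat \<Rightarrow> (nat \<Rightarrow> complex mat) \<Rightarrow> bool" where
  "irreducible_G_rep m n R \<longleftrightarrow> is_G_rep m n R \<and> n > 0 \<and>
     (\<forall>W. G_invariant_subspace m n R W \<longrightarrow> W = {0\<^sub>v n} \<or> W = carrier_vec n)"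

end

theory Submission
  imports Defs
begin

definition U :: "nat \<Rightarrow> nat \<Rightarrow> real" where "U v = (\<lambda>i. if i = v then 1 else 0)"

lemma cplx_simps[simp]: "Complex 0 0 = 0" "Complex 1 0 = 1" "Complex 0 1 = \<i>"
  by (simp_all add: complex_eq_iff)

lemma smult_0_one[simp]: "(0::complex) \<cdot>\<^sub>m 1\<^sub>m n = 0\<^sub>m n n"
  by (rule eq_matI) auto
lemma smult_1_one[simp]: "(1::complex) \<cdot>\<^sub>m 1\<^sub>m n = 1\<^sub>m n"
  by (rule eq_matI) auto
lemma smult_m1_one[simp]: "(-1::complex) \<cdot>\<^sub>m 1\<^sub>m n = - 1\<^sub>m n"
  by (rule eq_matI) auto

lemma mat_H_carrier[simp]: "A \<in> carrier_mat n m \<Longrightarrow> mat_H A \<in> carrier_mat m n"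
  unfolding mat_H_def by auto

lemma mat_H_dims[simp]: "dim_row (mat_H A) = dim_col A" "dim_col (mat_H A) = dim_row A"
  unfolding mat_H_def by auto

lemma Hd_carrier[simp]: "Hd (Suc j) x \<in> carrier_mat (2^j) (2^j)"
proof (induction j)
  case 0 then show ?case by simp
next
  case (Suc j)
  have "four_block_mat (Hd (Suc j) x) (c \<cdot>\<^sub>m 1\<^sub>m (2^j)) (d \<cdot>\<^sub>m 1\<^sub>m (2^j)) (mat_H (Hd (Suc j) x))
     \<in> carrier_mat (2^j + 2^j) (2^j+2^j)" for c d
    by (rule four_block_carrier_mat) (use Suc in auto)
  moreover have "(2::nat)^Suc j = 2^j + 2^j" by simp
  ultimately show ?case by (simp only: Hd.simps Let_def)
qed

lemma mat_H_four_block: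
  assumes "A \<in> carrier_mat n n" "B \<in> carrier_mat n n" "C \<in> carrier_mat n n" "D \<in> carrier_mat n n"
  shows "mat_H (four_block_mat A B C D) = four_block_mat (mat_H A) (mat_H C) (mat_H B) (mat_H D)"
  unfolding mat_H_def using assms
  by (simp add: map_four_block_mat[of _ n n _ n _ n] transpose_four_block_mat[of _ n n _ n _ n])

lemma mat_H_uminus: "mat_H (- A) = - mat_H A"
  unfolding mat_H_def by (rule eq_matI) auto

lemma mat_H_smult_one: "mat_H (c \<cdot>\<^sub>m 1\<^sub>m n) = cnj c \<cdot>\<^sub>m 1\<^sub>m n"
  unfolding mat_H_def by (rule eq_matI) auto

lemma mat_H_zero[simp]: "mat_H (0\<^sub>m n m) = 0\<^sub>m m n"
  unfolding mat_H_def by (rule eq_matI) auto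

lemma mat_H_one[simp]: "mat_H (1\<^sub>m n) = 1\<^sub>m n"
  unfolding mat_H_def by (rule eq_matI) auto

lemma mat_H_mat_H[simp]: "mat_H (mat_H A) = A"
  unfolding mat_H_def by (rule eq_matI) auto

lemma Hd_zero: "(\<forall>i\<in>{1..2*j+2}. x i = 0) \<Longrightarrow> Hd (Suc j) x = 0\<^sub>m (2^j) (2^j)"
proof (induction j)
  case 0
  then have "x 1 = 0" "x 2 = 0" by auto
  then show ?case by (intro eq_matI) auto
next
  case (Suc j)
  then have h: "Hd (Suc j) x = 0\<^sub>m (2^j) (2^j)" by auto
  have "x (2*j+3) = 0" "x (2*j+4) = 0" using Suc.prems by auto
  moreover have "(2::nat)^Suc j = 2^j + 2^j" by simp
  ultimately show ?case using h by (simp only: Hd.simps Let_def cplx_simps) simp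
qed

lemma F_low: "v \<le> 2*j+2 \<Longrightarrow> Hd (Suc (Suc j)) (U v) =
   four_block_mat (Hd (Suc j) (U v)) (0\<^sub>m (2^j) (2^j)) (0\<^sub>m (2^j) (2^j)) (mat_H (Hd (Suc j) (U v)))"
proof -
  assume "v \<le> 2*j+2"
  then have u: "U v (2*j+3) = 0" "U v (2*j+4) = 0" by (auto simp: U_def)
  show ?thesis unfolding Hd.simps Let_def u by simp
qed

lemma F_J: "Hd (Suc (Suc j)) (U (2*j+3)) =
   four_block_mat (0\<^sub>m (2^j) (2^j)) (1\<^sub>m (2^j)) (- 1\<^sub>m (2^j)) (0\<^sub>m (2^j) (2^j))"
proof -
  have h: "Hd (Suc j) (U (2*j+3)) = 0\<^sub>m (2^j) (2^j)" by (rule Hd_zero) (auto simp: U_def)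
  have u: "U (2*j+3) (2*j+3) = 1" "U (2*j+3) (2*j+4) = 0" by (auto simp: U_def)
  show ?thesis unfolding Hd.simps Let_def h u by simp
qed

lemma F_K: "Hd (Suc (Suc j)) (U (2*j+4)) =
   four_block_mat (0\<^sub>m (2^j) (2^j)) (\<i> \<cdot>\<^sub>m 1\<^sub>m (2^j)) (\<i> \<cdot>\<^sub>m 1\<^sub>m (2^j)) (0\<^sub>m (2^j) (2^j))"
proof -
  have h: "Hd (Suc j) (U (2*j+4)) = 0\<^sub>m (2^j) (2^j)" by (rule Hd_zero) (auto simp: U_def)
  have u: "U (2*j+4) (2*j+3) = 0" "U (2*j+4) (2*j+4) = 1" by (auto simp: U_def)
  show ?thesis unfolding Hd.simps Let_def h u by simp
qed

abbreviation F :: "nat \<Rightarrow> nat \<Rightarrow> complex mat" where "F j v \<equiv> Hd (Suc j) (U v)"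

lemma F_carrier[simp]: "F j v \<in> carrier_mat (2^j) (2^j)" by simp

lemma Hd_dims[simp]: "dim_row (Hd (Suc j) x) = 2^j" "dim_col (Hd (Suc j) x) = 2^j"
  using Hd_carrier[of j x] unfolding carrier_mat_def by blast+

lemma pow2_Suc: "(2::nat)^Suc j = 2^j + 2^j" by simp

lemma uminus_four_block:
  assumes "A \<in> carrier_mat n n" "B \<in> carrier_mat n n" "C \<in> carrier_mat n n" "D \<in> carrier_mat n n"
  shows "- four_block_mat A B C D = four_block_mat (-A) (-B) (-C) (-D)"
  using assms by (intro eq_matI) auto

lemma neg_zero_mat[simp]: "- 0\<^sub>m n m = (0\<^sub>m n m :: complex mat)"
  by (intro eq_matI) auto

lemma F1: "F j 1 = 1\<^sub>m (2^j)"
proof (induction j)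
  case 0 then show ?case by (intro eq_matI) (auto simp: U_def)
next
  case (Suc j)
  have "F (Suc j) 1 = four_block_mat (F j 1) (0\<^sub>m (2^j) (2^j)) (0\<^sub>m (2^j) (2^j)) (mat_H (F j 1))"
    by (rule F_low) simp
  then show ?case unfolding Suc pow2_Suc by simp
qed

lemma F_skew: "v \<in> {2..2*j+2} \<Longrightarrow> mat_H (F j v) = - F j v"
proof (induction j arbitrary: v)
  case 0
  then have "v = 2" by auto
  then show ?case by (intro eq_matI) (auto simp: U_def mat_H_def)
next
  case (Suc j)
  consider "v \<le> 2*j+2" | "v = 2*j+3" | "v = 2*j+4" using Suc.prems by force
  then show ?case
  proof cases
    case 1
    then have IH: "mat_H (F j v) = - F j v" using Suc by auto
    show ?thesis unfolding F_low[OF 1]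
      by (subst mat_H_four_block[of _ "2^j"], auto simp: IH mat_H_uminus uminus_four_block[of _ "2^j"])
  next
    case 2
    show ?thesis unfolding 2 F_J
      by (subst mat_H_four_block[of _ "2^j"], auto simp: mat_H_uminus uminus_four_block[of _ "2^j"])
  next
    case 3
    have e: "mat_H (\<i> \<cdot>\<^sub>m 1\<^sub>m n) = - (\<i> \<cdot>\<^sub>m 1\<^sub>m n)" for n
      unfolding mat_H_def by (intro eq_matI) auto
    show ?thesis unfolding 3 F_K
      by (subst mat_H_four_block[of _ "2^j"], auto simp: e uminus_four_block[of _ "2^j"])
  qed
qed

lemma F_low': "v \<in> {2..2*j+2} \<Longrightarrow> F (Suc j) v =
   four_block_mat (F j v) (0\<^sub>m (2^j) (2^j)) (0\<^sub>m (2^j) (2^j)) (- F j v)"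
  using F_low[of v j] F_skew[of v j] by auto

lemma mfb:
  assumes "A1 \<in> carrier_mat n n" "B1 \<in> carrier_mat n n" "C1 \<in> carrier_mat n n" "D1 \<in> carrier_mat n n"
    "A2 \<in> carrier_mat n n" "B2 \<in> carrier_mat n n" "C2 \<in> carrier_mat n n" "D2 \<in> carrier_mat n n"
  shows "four_block_mat A1 B1 C1 D1 * four_block_mat A2 B2 C2 D2
  = four_block_mat (A1 * A2 + B1 * C2) (A1 * B2 + B1 * D2)
    (C1 * A2 + D1 * C2) (C1 * B2 + D1 * D2)"
  by (rule mult_four_block_mat) (use assms in auto)

lemma smult_one_left[simp]: "dim_row A = n \<Longrightarrow> (c \<cdot>\<^sub>m 1\<^sub>m n) * A = c \<cdot>\<^sub>m (A :: complex mat)"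
  by (subst mult_smult_assoc_mat[of _ n n _ "dim_col A"]) auto
lemma smult_one_right[simp]: "dim_col A = n \<Longrightarrow> A * (c \<cdot>\<^sub>m 1\<^sub>m n) = c \<cdot>\<^sub>m (A :: complex mat)"
  by (subst mult_smult_distrib[of _ "dim_row A" n _ n]) auto
lemma smult_smult_mat[simp]: "a \<cdot>\<^sub>m (b \<cdot>\<^sub>m (A :: complex mat)) = (a*b) \<cdot>\<^sub>m A"
  by (intro eq_matI) auto
lemma uminus_smult_mat: "- (a \<cdot>\<^sub>m (A :: complex mat)) = (-a) \<cdot>\<^sub>m A"
  by (intro eq_matI) auto
lemma smult_uminus_mat: "a \<cdot>\<^sub>m (- (A :: complex mat)) = (-a) \<cdot>\<^sub>m A"
  by (intro eq_matI) auto
lemma neg_one_mat: "- 1\<^sub>m (n+n) = four_block_mat (- 1\<^sub>m n) (0\<^sub>m n n) (0\<^sub>m n n) (- (1\<^sub>m n :: complex mat))"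
proof -
  have "four_block_mat (- 1\<^sub>m n) (- 0\<^sub>m n n) (- 0\<^sub>m n n) (- (1\<^sub>m n :: complex mat)) = - four_block_mat (1\<^sub>m n) (0\<^sub>m n n) (0\<^sub>m n n) (1\<^sub>m n)"
    by (rule uminus_four_block[symmetric]) auto
  then show ?thesis by simp
qed

lemmas blk_simps = left_add_zero_mat right_add_zero_mat
  uminus_smult_mat smult_uminus_mat

lemma F_sq: "v \<in> {2..2*j+2} \<Longrightarrow> F j v * F j v = - 1\<^sub>m (2^j)"
proof (induction j arbitrary: v)
  case 0
  then have "v = 2" by auto
  then show ?case by (intro eq_matI) (auto simp: U_def scalar_prod_def)
next
  case (Suc j)
  consider "v \<in> {2..2*j+2}" | "v = 2*j+3" | "v = 2*j+4" using Suc.prems by force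
  then show ?case
  proof cases
    case 1
    show ?thesis unfolding F_low'[OF 1] pow2_Suc neg_one_mat
      by (auto simp: blk_simps mfb[where n="2^j"] uminus_four_block[where n="2^j"] Suc.IH[OF 1])
  next
    case 2
    show ?thesis unfolding 2 F_J pow2_Suc neg_one_mat
      by (auto simp: blk_simps mfb[where n="2^j"] uminus_four_block[where n="2^j"])
  next
    case 3
    show ?thesis unfolding 3 F_K pow2_Suc neg_one_mat
      by (auto simp: blk_simps mfb[where n="2^j"] uminus_four_block[where n="2^j"])
  qed
qed

lemma F_anti_lt: "v \<in> {2..2*j+2} \<Longrightarrow> w \<in> {2..2*j+2} \<Longrightarrow> v < w \<Longrightarrow> F j v * F j w = - (F j w * F j v)"
proof (induction j arbitrary: v w)
  case 0
  then show ?case by auto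
next
  case (Suc j)
  note S = blk_simps mfb[where n="2^j"] uminus_four_block[where n="2^j"]
  consider "w \<in> {2..2*j+2}" | "v \<in> {2..2*j+2}" "w = 2*j+3" | "v \<in> {2..2*j+2}" "w = 2*j+4"
    | "v = 2*j+3" "w = 2*j+4" using Suc.prems by force
  then show ?case
  proof cases
    case 1
    then have 2: "v \<in> {2..2*j+2}" using Suc.prems by auto
    show ?thesis unfolding F_low'[OF 1] F_low'[OF 2]
      by (auto simp: S Suc.IH[OF 2 1 Suc.prems(3)])
  next
    case 2
    show ?thesis unfolding F_low'[OF 2(1)] 2(2) F_J by (auto simp: S)
  next
    case 3
    show ?thesis unfolding F_low'[OF 3(1)] 3(2) F_K by (auto simp: S)
  next
    case 4
    show ?thesis unfolding 4 F_K F_J by (auto simp: S)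
  qed
qed

lemma F_anti: "v \<in> {2..2*j+2} \<Longrightarrow> w \<in> {2..2*j+2} \<Longrightarrow> v \<noteq> w \<Longrightarrow> F j v * F j w = - (F j w * F j v)"
  using F_anti_lt[of v j w] F_anti_lt[of w j v]
  by (cases "v < w") auto

fun PF :: "nat \<Rightarrow> nat \<Rightarrow> complex mat" where
  "PF j 0 = 1\<^sub>m (2^j)"
| "PF j (Suc m) = PF j m * F j (m+2)"

lemma PF_carrier[simp]: "PF j m \<in> carrier_mat (2^j) (2^j)"
  by (induction m) auto

lemma PF_dims[simp]: "dim_row (PF j m) = 2^j" "dim_col (PF j m) = 2^j"
  using PF_carrier[of j m] unfolding carrier_mat_def by blast+

lemma smult_mult_left[simp]: "dim_col A = dim_row B \<Longrightarrow> (c \<cdot>\<^sub>m A) * B = c \<cdot>\<^sub>m (A * (B :: complex mat))"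
  by (rule mult_smult_assoc_mat[of _ "dim_row A" "dim_col A" _ "dim_col B"]) auto
lemma smult_mult_right[simp]: "dim_col A = dim_row B \<Longrightarrow> A * (c \<cdot>\<^sub>m B) = c \<cdot>\<^sub>m (A * (B :: complex mat))"
  by (rule mult_smult_distrib[of _ "dim_row A" "dim_col A" _ "dim_col B"]) auto

lemma PF_low: "m \<le> 2*j+1 \<Longrightarrow> PF (Suc j) m =
  four_block_mat (PF j m) (0\<^sub>m (2^j) (2^j)) (0\<^sub>m (2^j) (2^j)) ((-1)^m \<cdot>\<^sub>m PF j m)"
proof (induction m)
  case 0
  show ?case unfolding PF.simps pow2_Suc by simp
next
  case (Suc m)
  then have IH: "PF (Suc j) m =
    four_block_mat (PF j m) (0\<^sub>m (2^j) (2^j)) (0\<^sub>m (2^j) (2^j)) ((-1)^m \<cdot>\<^sub>m PF j m)" by auto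
  have v: "m + 2 \<in> {2..2*j+2}" using Suc.prems by auto
  show ?case unfolding PF.simps IH F_low'[OF v]
    by (auto simp: blk_simps mfb[where n="2^j"])
qed

lemma diag_smult: "four_block_mat ((c::complex) \<cdot>\<^sub>m 1\<^sub>m n) (0\<^sub>m n n) (0\<^sub>m n n) (c \<cdot>\<^sub>m 1\<^sub>m n) = c \<cdot>\<^sub>m 1\<^sub>m (n+n)"
  by (intro eq_matI) auto

lemma PF_scalar: "\<exists>s. s \<noteq> 0 \<and> PF j (2*j+1) = s \<cdot>\<^sub>m 1\<^sub>m (2^j)"
proof (induction j)
  case 0
  have "PF 0 1 = \<i> \<cdot>\<^sub>m 1\<^sub>m 1"
    by (intro eq_matI) (auto simp: U_def scalar_prod_def)
  then show ?case by (intro exI[of _ \<i>]) auto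
next
  case (Suc j)
  then obtain s where s: "s \<noteq> 0" "PF j (2*j+1) = s \<cdot>\<^sub>m 1\<^sub>m (2^j)" by auto
  have e: "2 * Suc j + 1 = Suc (Suc (2*j+1))" by simp
  have P: "PF (Suc j) (2*j+1) = four_block_mat (s \<cdot>\<^sub>m 1\<^sub>m (2^j)) (0\<^sub>m (2^j) (2^j)) (0\<^sub>m (2^j) (2^j)) ((-s) \<cdot>\<^sub>m 1\<^sub>m (2^j))"
  proof -
    have P0: "PF (Suc j) (2*j+1) = four_block_mat (PF j (2*j+1)) (0\<^sub>m (2^j) (2^j)) (0\<^sub>m (2^j) (2^j)) ((-1)^(2*j+1) \<cdot>\<^sub>m PF j (2*j+1))"
      by (rule PF_low) simp
    show ?thesis using P0 unfolding s(2) by simp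
  qed
  have "PF (Suc j) (2 * Suc j + 1) = (s*\<i>) \<cdot>\<^sub>m 1\<^sub>m (2^Suc j)"
  proof -
    have e2: "2*j+1+2 = 2*j+3" "Suc(2*j+1)+2 = 2*j+4" by simp_all
    have "PF (Suc j) (2 * Suc j + 1) = PF (Suc j) (2*j+1) * F (Suc j) (2*j+3) * F (Suc j) (2*j+4)"
      by (simp only: e PF.simps(2) e2)
    also have "\<dots> = (s*\<i>) \<cdot>\<^sub>m 1\<^sub>m (2^Suc j)"
      unfolding P F_J F_K pow2_Suc diag_smult[symmetric]
      by (auto simp: blk_simps mfb[where n="2^j"])
    finally show ?thesis .
  qed
  then show ?case using s by (intro exI[of _ "s*\<i>"]) auto
qed

lemma mat_vec_zero[simp]: "dim_col A = n \<Longrightarrow> A *\<^sub>v 0\<^sub>v n = 0\<^sub>v (dim_row A)"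
  by (intro eq_vecI) (auto simp: row_def)

lemma smult_one_mult_vec[simp]: "v \<in> carrier_vec n \<Longrightarrow> ((c::complex) \<cdot>\<^sub>m 1\<^sub>m n) *\<^sub>v v = c \<cdot>\<^sub>v v"
proof -
  assume v: "v \<in> carrier_vec n"
  have "(c \<cdot>\<^sub>m 1\<^sub>m n) *\<^sub>v v = (1\<^sub>m n) *\<^sub>v (c \<cdot>\<^sub>v v)"
  proof (intro eq_vecI)
    fix i assume i: "i < dim_vec (1\<^sub>m n *\<^sub>v (c \<cdot>\<^sub>v v))"
    have "(\<Sum>ia = 0..<n. c * (if ia = i then 1 else 0) * v $ ia) = (\<Sum>ia = 0..<n. if ia = i then c * v $ i else 0)"
      by (rule sum.cong) auto
    then show "((c \<cdot>\<^sub>m 1\<^sub>m n) *\<^sub>v v) $ i = (1\<^sub>m n *\<^sub>v (c \<cdot>\<^sub>v v)) $ i"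
      using i v by (auto simp: scalar_prod_def)
  qed (use v in auto)
  also have "\<dots> = c \<cdot>\<^sub>v v" using v by simp
  finally show ?thesis .
qed

lemma neg_one_mult_vec[simp]: "v \<in> carrier_vec n \<Longrightarrow> (- 1\<^sub>m n) *\<^sub>v (v::complex vec) = - v"
  by (subst uminus_mult_mat_vec) auto

lemma smult_append: "c \<cdot>\<^sub>v (a @\<^sub>v b) = (c \<cdot>\<^sub>v a) @\<^sub>v (c \<cdot>\<^sub>v b)"
  by (intro eq_vecI) auto

lemma smult_zero_vec'[simp]: "(c::complex) \<cdot>\<^sub>v 0\<^sub>v n = 0\<^sub>v n"
  by (intro eq_vecI) auto

lemma zero_append: "0\<^sub>v n @\<^sub>v 0\<^sub>v m = 0\<^sub>v (n+m)"
  by (intro eq_vecI) auto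

lemma PF_inv: "W \<subseteq> carrier_vec (2^j) \<Longrightarrow> (\<forall>v\<in>{2..m+1}. \<forall>w\<in>W. F j v *\<^sub>v w \<in> W) \<Longrightarrow>
  w \<in> W \<Longrightarrow> PF j m *\<^sub>v w \<in> W"
proof (induction m arbitrary: w)
  case 0
  then show ?case by auto
next
  case (Suc m)
  have w: "w \<in> carrier_vec (2^j)" using Suc by auto
  have "F j (m+2) *\<^sub>v w \<in> W" using Suc.prems by auto
  then have "PF j m *\<^sub>v (F j (m+2) *\<^sub>v w) \<in> W" using Suc by auto
  then show ?case using w by (subst PF.simps, subst assoc_mult_mat_vec[of _ "2^j" "2^j" _ "2^j"]) auto
qed

definition invS :: "nat \<Rightarrow> complex vec set \<Rightarrow> bool" where
  "invS j W \<longleftrightarrow> W \<subseteq> carrier_vec (2^j) \<and> 0\<^sub>v (2^j) \<in> W \<and> (\<forall>v\<in>W. \<forall>w\<in>W. v + w \<in> W) \<and>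
     (\<forall>c. \<forall>w\<in>W. c \<cdot>\<^sub>v w \<in> W) \<and> (\<forall>v\<in>{2..2*j+1}. \<forall>w\<in>W. F j v *\<^sub>v w \<in> W)"

lemma irr: "invS j W \<Longrightarrow> W = {0\<^sub>v (2^j)} \<or> W = carrier_vec (2^j)"
proof (induction j arbitrary: W)
  case 0
  then have W: "W \<subseteq> carrier_vec 1" "0\<^sub>v 1 \<in> W" "\<forall>c. \<forall>w\<in>W. c \<cdot>\<^sub>v w \<in> W" by (auto simp: invS_def)
  show ?case
  proof (cases "W = {0\<^sub>v 1}")
    case False
    then obtain w where w: "w \<in> W" "w \<noteq> 0\<^sub>v 1" using W by auto
    have wc: "w \<in> carrier_vec 1" using w W by auto
    have w0: "w $ 0 \<noteq> 0"
    proof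
      assume "w $ 0 = 0"
      then have "w = 0\<^sub>v 1" using wc by (intro eq_vecI) auto
      then show False using w by auto
    qed
    have "u \<in> W" if u: "u \<in> carrier_vec 1" for u
    proof -
      have "u = (u $ 0 / w $ 0) \<cdot>\<^sub>v w" using u wc w0 by (intro eq_vecI) auto
      then show ?thesis using W(3) w by metis
    qed
    then show ?thesis using W by auto
  qed auto
next
  case (Suc j)
  define n where "n = (2::nat)^j"
  have nn: "(2::nat)^Suc j = n + n" unfolding n_def by simp
  note P = Suc.prems[unfolded invS_def nn]
  have Wc: "W \<subseteq> carrier_vec (n+n)" and W0: "0\<^sub>v (n+n) \<in> W"
    and Wadd: "\<And>v w. v \<in> W \<Longrightarrow> w \<in> W \<Longrightarrow> v + w \<in> W"
    and Wsm: "\<And>c w. w \<in> W \<Longrightarrow> c \<cdot>\<^sub>v w \<in> W"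
    and WF: "\<And>v w. v \<in> {2..2*j+3} \<Longrightarrow> w \<in> W \<Longrightarrow> F (Suc j) v *\<^sub>v w \<in> W"
    using P by auto
  define W1 where "W1 = {x \<in> carrier_vec n. x @\<^sub>v 0\<^sub>v n \<in> W}"
  have J: "F (Suc j) (2*j+3) *\<^sub>v (a @\<^sub>v b) = b @\<^sub>v (- a)" if "a \<in> carrier_vec n" "b \<in> carrier_vec n" for a b
    unfolding F_J n_def[symmetric] using that
    by (subst four_block_mat_mult_vec[of _ n n _ n _ n]) auto
  have low: "F (Suc j) v *\<^sub>v (a @\<^sub>v 0\<^sub>v n) = (F j v *\<^sub>v a) @\<^sub>v 0\<^sub>v n" if "v \<in> {2..2*j+2}" "a \<in> carrier_vec n" for v a
    unfolding F_low'[OF that(1)] n_def[symmetric] using that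
    by (subst mult_mat_vec_split[of _ n _ n]) (auto simp: n_def)
  have "invS j W1"
    unfolding invS_def n_def[symmetric]
  proof (intro conjI ballI allI)
    show "W1 \<subseteq> carrier_vec n" unfolding W1_def by auto
    show "0\<^sub>v n \<in> W1" unfolding W1_def using W0 by (auto simp: zero_append)
    fix v w assume "v \<in> W1" "w \<in> W1"
    then show "v + w \<in> W1" unfolding W1_def
      using Wadd[of "v @\<^sub>v 0\<^sub>v n" "w @\<^sub>v 0\<^sub>v n"] by (auto simp: append_vec_add[of _ n _ _ n])
  next
    fix c w assume "w \<in> W1"
    then show "c \<cdot>\<^sub>v w \<in> W1" unfolding W1_def
      using Wsm[of "w @\<^sub>v 0\<^sub>v n" c] by (auto simp: smult_append)
  next
    fix v w assume v: "v \<in> {2..2*j+1}" and w1: "w \<in> W1"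
    have wc: "w \<in> carrier_vec n" and ww: "w @\<^sub>v 0\<^sub>v n \<in> W" using w1 unfolding W1_def by auto
    have v': "v \<in> {2..2*j+3}" "v \<in> {2..2*j+2}" using v by auto
    have "F (Suc j) v *\<^sub>v (w @\<^sub>v 0\<^sub>v n) \<in> W" by (rule WF[OF v'(1) ww])
    then have "(F j v *\<^sub>v w) @\<^sub>v 0\<^sub>v n \<in> W" by (simp only: low[OF v'(2) wc])
    moreover have "F j v *\<^sub>v w \<in> carrier_vec n" unfolding n_def
      by (rule mult_mat_vec_carrier[OF F_carrier]) (use wc n_def in simp)
    ultimately show "F j v *\<^sub>v w \<in> W1" unfolding W1_def by blast
  qed
  then have W1: "W1 = {0\<^sub>v n} \<or> W1 = carrier_vec n" using Suc.IH unfolding n_def by blast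
  show ?case unfolding nn
  proof (cases "W = {0\<^sub>v (n+n)}")
    case False
    then obtain w where w: "w \<in> W" "w \<noteq> 0\<^sub>v (n+n)" using W0 by auto
    define x where "x = vec_first w n"
    define y where "y = vec_last w n"
    have xy: "x \<in> carrier_vec n" "y \<in> carrier_vec n" "w = x @\<^sub>v y"
      unfolding x_def y_def using w Wc by auto
    obtain s where s: "s \<noteq> 0" "PF j (2*j+1) = s \<cdot>\<^sub>m 1\<^sub>m n" using PF_scalar[of j] unfolding n_def by auto
    have Q: "PF (Suc j) (2*j+1) = four_block_mat (s \<cdot>\<^sub>m 1\<^sub>m n) (0\<^sub>m n n) (0\<^sub>m n n) ((-s) \<cdot>\<^sub>m 1\<^sub>m n)"
    proof -
      have P0: "PF (Suc j) (2*j+1) = four_block_mat (PF j (2*j+1)) (0\<^sub>m n n) (0\<^sub>m n n) ((-1)^(2*j+1) \<cdot>\<^sub>m PF j (2*j+1))"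
        unfolding n_def by (rule PF_low) simp
      show ?thesis using P0 unfolding s(2) by simp
    qed
    have "PF (Suc j) (2*j+1) *\<^sub>v w \<in> W"
      by (rule PF_inv[of W "Suc j"]) (use Wc WF w nn in auto)
    then have Qw: "(s \<cdot>\<^sub>v x) @\<^sub>v ((-s) \<cdot>\<^sub>v y) \<in> W" unfolding Q xy(3) using xy
      by (subst (asm) mult_mat_vec_split[of _ n _ n]) auto
    have "x @\<^sub>v 0\<^sub>v n = (1/2) \<cdot>\<^sub>v (w + (1/s) \<cdot>\<^sub>v ((s \<cdot>\<^sub>v x) @\<^sub>v ((-s) \<cdot>\<^sub>v y)))"
      using xy s by (intro eq_vecI) auto
    then have x: "x \<in> W1" unfolding W1_def using xy Wsm Wadd Qw w by auto
    have "0\<^sub>v n @\<^sub>v y = (1/2) \<cdot>\<^sub>v (w + (-1/s) \<cdot>\<^sub>v ((s \<cdot>\<^sub>v x) @\<^sub>v ((-s) \<cdot>\<^sub>v y)))"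
      using xy s by (intro eq_vecI) auto
    then have "0\<^sub>v n @\<^sub>v y \<in> W" using xy Wsm Wadd Qw w by auto
    then have "F (Suc j) (2*j+3) *\<^sub>v (0\<^sub>v n @\<^sub>v y) \<in> W" using WF by auto
    then have y: "y \<in> W1" unfolding W1_def using J[of "0\<^sub>v n" y] xy by auto
    have "x \<noteq> 0\<^sub>v n \<or> y \<noteq> 0\<^sub>v n" using w xy by (auto simp: zero_append)
    then have W1c: "W1 = carrier_vec n" using W1 x y by auto
    have "u \<in> W" if u: "u \<in> carrier_vec (n+n)" for u
    proof -
      define a where "a = vec_first u n"
      define b where "b = vec_last u n"
      have ab: "a \<in> carrier_vec n" "b \<in> carrier_vec n" "u = a @\<^sub>v b"
        unfolding a_def b_def using u by auto
      have A: "a @\<^sub>v 0\<^sub>v n \<in> W" using W1c ab unfolding W1_def by auto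
      have "b @\<^sub>v 0\<^sub>v n \<in> W" using W1c ab unfolding W1_def by auto
      then have "F (Suc j) (2*j+3) *\<^sub>v (b @\<^sub>v 0\<^sub>v n) \<in> W" using WF by auto
      then have "0\<^sub>v n @\<^sub>v (- b) \<in> W" using J[of b "0\<^sub>v n"] ab by auto
      then have "(-1) \<cdot>\<^sub>v (0\<^sub>v n @\<^sub>v (- b)) \<in> W" using Wsm by blast
      moreover have "(-1) \<cdot>\<^sub>v (0\<^sub>v n @\<^sub>v (- b)) = 0\<^sub>v n @\<^sub>v b" using ab by (intro eq_vecI) auto
      ultimately have B: "0\<^sub>v n @\<^sub>v b \<in> W" by simp
      have "(a @\<^sub>v 0\<^sub>v n) + (0\<^sub>v n @\<^sub>v b) = u" using ab by (intro eq_vecI) auto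
      then show ?thesis using Wadd[OF A B] by simp
    qed
    then show "W = {0\<^sub>v (n+n)} \<or> W = carrier_vec (n+n)" using Wc by auto
  qed auto
qed

lemma Gmat_F: "i \<le> 2*j \<Longrightarrow> Gmat (Suc j) i = F j (i+1)"
proof -
  assume i: "i \<le> 2*j"
  have e: "(U (i+1))(2 * Suc j := 0) = U (i+1)" if "i+1 \<noteq> 2 * Suc j" for i
    using that by (auto simp: U_def)
  have E: "Ecoef (Suc j) i = F j (i+1)" if "i \<le> 2*j" for i
    unfolding Ecoef_def Hodd_def U_def[symmetric] using e[of i] that by simp
  have E0: "Ecoef (Suc j) 0 = 1\<^sub>m (2^j)" using E[of 0] F1[of j] by simp
  show ?thesis unfolding Gmat_def E[OF i] E0 by simp
qed

theorem lemma6: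
  fixes k :: nat
  assumes "k \<ge> 1"
  shows "irreducible_G_rep (2*k - 2) (2^(k-1)) (Gmat k)"
proof -
  obtain j where k: "k = Suc j" using assms by (cases k) auto
  have m: "2*k - 2 = 2*j" "k - 1 = j" using k by auto
  have G: "\<And>i. i \<in> {1..2*j} \<Longrightarrow> Gmat k i = F j (i+1)" using Gmat_F k by auto
  have rep: "is_G_rep (2*j) (2^j) (Gmat k)"
    unfolding is_G_rep_def
  proof (intro conjI ballI impI)
    fix i assume i: "i \<in> {1..2*j}"
    show "Gmat k i \<in> carrier_mat (2^j) (2^j)" unfolding G[OF i] by simp
    show "Gmat k i * Gmat k i = - 1\<^sub>m (2^j)" unfolding G[OF i] by (rule F_sq) (use i in auto)
  next
    fix i l assume i: "i \<in> {1..2*j}" and l: "l \<in> {1..2*j}" and ne: "i \<noteq> l"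
    show "Gmat k i * Gmat k l = - (Gmat k l * Gmat k i)" unfolding G[OF i] G[OF l]
      by (rule F_anti) (use i l ne in auto)
  qed
  have "W = {0\<^sub>v (2^j)} \<or> W = carrier_vec (2^j)" if W: "G_invariant_subspace (2*j) (2^j) (Gmat k) W" for W
  proof (rule irr)
    show "invS j W" unfolding invS_def
    proof (intro conjI ballI allI)
      show "W \<subseteq> carrier_vec (2^j)" "0\<^sub>v (2^j) \<in> W" using W unfolding G_invariant_subspace_def by auto
      show "v + w \<in> W" if "v \<in> W" "w \<in> W" for v w using W that unfolding G_invariant_subspace_def by auto
      show "c \<cdot>\<^sub>v w \<in> W" if "w \<in> W" for c w using W that unfolding G_invariant_subspace_def by auto
      fix v w assume v: "v \<in> {2..2*j+1}" and w: "w \<in> W"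
      have i: "v - 1 \<in> {1..2*j}" using v by auto
      have "Gmat k (v-1) *\<^sub>v w \<in> W" using W i w unfolding G_invariant_subspace_def by blast
      moreover have "v - 1 + 1 = v" using v by auto
      ultimately show "F j v *\<^sub>v w \<in> W" using G[OF i] by simp
    qed
  qed
  then show ?thesis unfolding irreducible_G_rep_def m using rep by auto
qed

end
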